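(* For any path $\omega\in\Omega$ that is wCH-random for a computable precise temporal forecasting system $\varphi$: $\big[\liminf_{n\to\infty}\varphi(\omega_{1:n}),\ \limsup_{n\to\infty}\varphi(\omega_{1:n})\big]\subseteq I_\textnormal{wCH}(\omega).$
   Context: $\mathcal{X}=\{0,1\}$; $\Omega=\mathcal{X}^{\mathbb{N}}$ (paths); $\mathbb{S}=\bigcup_{n\ge0}\mathcal X^n$ (situations), $|s|$ length, $\omega_{1:n}=(\omega_1,\dots,\omega_n)$, $\omega_{1:0}$ the empty string. $\mathcal{I}$: nonempty closed intervals $I\subseteq[0,1]$. A forecasting system is $\varphi:\mathbb S\to\mathcal I$, $\underline\varphi=\min\varphi$, $\overline\varphi=\max\varphi$; precise if $\underline\varphi=\overline\varphi$ (then $\varphi(s)$ is identified with the number $\underline\varphi(s)$); temporal if $\varphi(s)=\varphi(t)$ whenever $|s|=|t|$; an interval forecast $I$ is identified with the constant forecasting system $s\mapsto I$. $\varphi$ is computable if there are recursive $\underline q,\overline q:\mathbb S\times\mathbb N_0\to\mathbb Q$ with $|\underline\varphi(s)-\underline q(s,n)|<2^{-n}$ and $|\overline\varphi(s)-\overline q(s,n)|<2^{-n}$. A path $\omega$ is wCH-random for $\varphi$ if for every recursive temporal selection process $S:\mathbb S\to\{0,1\}$ (i.e. $S(s)$ depends only on $|s|$) with $\sum_{k=0}^{n-1}S(\omega_{1:k})\to\infty$: $\liminf_n \frac{\sum_{k<n}S(\omega_{1:k})[\omega_{k+1}-\underline\varphi(\omega_{1:k})]}{\sum_{k<n}S(\omega_{1:k})}\ge0$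 and $\limsup_n \frac{\sum_{k<n}S(\omega_{1:k})[\omega_{k+1}-\overline\varphi(\omega_{1:k})]}{\sum_{k<n}S(\omega_{1:k})}\le0$. $\mathcal I_\textnormal{wCH}(\omega)=\{I\in\mathcal I:\omega\text{ wCH-random for }I\}$, $I_\textnormal{wCH}(\omega)=\bigcap_{I\in\mathcal I_\textnormal{wCH}(\omega)}I$. *)

theory Defs
  imports "HOL-Analysis.Analysis"
begin

primrec prim_rec :: "(nat list \<Rightarrow> nat) \<Rightarrow> (nat list \<Rightarrow> nat) \<Rightarrow> nat \<Rightarrow> nat list \<Rightarrow> nat" where
  "prim_rec g h 0 ys = g ys"
| "prim_rec g h (Suc k) ys = h (k # prim_rec g h k ys # ys)"

text \<open>recfn n f: f is a total recursive function of arity n (only its values on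
  argument lists of length n matter).\<close>
inductive recfn :: "nat \<Rightarrow> (nat list \<Rightarrow> nat) \<Rightarrow> bool" where
  rf_zero: "recfn n (\<lambda>_. 0)"
| rf_succ: "recfn 1 (\<lambda>xs. Suc (hd xs))"
| rf_proj: "i < n \<Longrightarrow> recfn n (\<lambda>xs. xs ! i)"
| rf_comp: "recfn m g \<Longrightarrow> length fs = m \<Longrightarrow> (\<forall>f\<in>set fs. recfn n f)
            \<Longrightarrow> recfn n (\<lambda>xs. g (map (\<lambda>f. f xs) fs))"
| rf_prim: "recfn n g \<Longrightarrow> recfn (Suc (Suc n)) h
            \<Longrightarrow> recfn (Suc n) (\<lambda>xs. prim_rec g h (hd xs) (tl xs))"
| rf_mu: "recfn (Suc n) f \<Longrightarrow> (\<forall>ys. length ys = n \<longrightarrow> (\<exists>k. f (k # ys) = 0))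
            \<Longrightarrow> recfn n (\<lambda>ys. LEAST k. f (k # ys) = 0)"

text \<open>X = {0,1} is modelled by bool (with of_bool giving 0/1); a path is
  omega :: nat \<Rightarrow> bool where omega k is the (k+1)-th outcome; situations are bool lists.\<close>

definition prefix :: "(nat \<Rightarrow> bool) \<Rightarrow> nat \<Rightarrow> bool list" where
  "prefix \<omega> n = map \<omega> [0..<n]"

primrec sit_code :: "bool list \<Rightarrow> nat" where
  "sit_code [] = 1"
| "sit_code (b # s) = 2 * sit_code s + of_bool b"

text \<open>An interval forecast [a,b] \<subseteq> [0,1] is represented by the pair (a,b).\<close>
type_synonym interval = "real \<times> real"

definition is_interval :: "interval \<Rightarrow> bool" where
  "is_interval I \<longleftrightarrow> 0 \<le> fst I \<and> fst I \<le> snd I \<and> snd I \<le> 1"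

definition forecasting_system :: "(bool list \<Rightarrow> interval) \<Rightarrow> bool" where
  "forecasting_system \<phi> \<longleftrightarrow> (\<forall>s. is_interval (\<phi> s))"

definition lower :: "(bool list \<Rightarrow> interval) \<Rightarrow> bool list \<Rightarrow> real" where
  "lower \<phi> s = fst (\<phi> s)"

definition upper :: "(bool list \<Rightarrow> interval) \<Rightarrow> bool list \<Rightarrow> real" where
  "upper \<phi> s = snd (\<phi> s)"

definition precise :: "(bool list \<Rightarrow> interval) \<Rightarrow> bool" where
  "precise \<phi> \<longleftrightarrow> (\<forall>s. lower \<phi> s = upper \<phi> s)"

definition temporal :: "(bool list \<Rightarrow> interval) \<Rightarrow> bool" where
  "temporal \<phi> \<longleftrightarrow> (\<forall>s t. length s = length t \<longrightarrow> \<phi> s = \<phi> t)"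

definition recursive_rat_approx :: "(bool list \<Rightarrow> real) \<Rightarrow> bool" where
  "recursive_rat_approx f \<longleftrightarrow>
     (\<exists>A B C. recfn 2 A \<and> recfn 2 B \<and> recfn 2 C \<and>
        (\<forall>s n. \<bar>f s - (real (A [sit_code s, n]) - real (B [sit_code s, n]))
                       / (real (C [sit_code s, n]) + 1)\<bar> < (1/2) ^ n))"

definition computable_fs :: "(bool list \<Rightarrow> interval) \<Rightarrow> bool" where
  "computable_fs \<phi> \<longleftrightarrow> recursive_rat_approx (lower \<phi>) \<and> recursive_rat_approx (upper \<phi>)"

text \<open>A temporal selection process S(s) depends only on |s|, so it is given by
  a function Sel :: nat \<Rightarrow> bool with S(s) = Sel |s|; it is recursive iff Sel is.\<close>
definition recursive_temporal_selection :: "(nat \<Rightarrow> bool) \<Rightarrow> bool" where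
  "recursive_temporal_selection Sel \<longleftrightarrow> (\<exists>f. recfn 1 f \<and> (\<forall>k. f [k] = of_bool (Sel k)))"

definition sel_count :: "(nat \<Rightarrow> bool) \<Rightarrow> nat \<Rightarrow> real" where
  "sel_count Sel n = (\<Sum>k<n. of_bool (Sel k))"

definition wCH_random :: "(bool list \<Rightarrow> interval) \<Rightarrow> (nat \<Rightarrow> bool) \<Rightarrow> bool" where
  "wCH_random \<phi> \<omega> \<longleftrightarrow>
     (\<forall>Sel. recursive_temporal_selection Sel \<and> filterlim (sel_count Sel) at_top sequentially \<longrightarrow>
        liminf (\<lambda>n. ereal ((\<Sum>k<n. of_bool (Sel k) * (of_bool (\<omega> k) - lower \<phi> (prefix \<omega> k)))
                          / sel_count Sel n)) \<ge> 0 \<and>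
        limsup (\<lambda>n. ereal ((\<Sum>k<n. of_bool (Sel k) * (of_bool (\<omega> k) - upper \<phi> (prefix \<omega> k)))
                          / sel_count Sel n)) \<le> 0)"

definition I_wCH_family :: "(nat \<Rightarrow> bool) \<Rightarrow> interval set" where
  "I_wCH_family \<omega> = {I. is_interval I \<and> wCH_random (\<lambda>_. I) \<omega>}"

definition I_wCH :: "(nat \<Rightarrow> bool) \<Rightarrow> real set" where
  "I_wCH \<omega> = (\<Inter>I\<in>I_wCH_family \<omega>. {fst I..snd I})"

end

theory Submission
  imports Defs
begin


definition comp_by :: "nat \<Rightarrow> (nat list \<Rightarrow> nat) \<Rightarrow> bool" where
  "comp_by n g \<longleftrightarrow> (\<exists>f. recfn n f \<and> (\<forall>xs. length xs = n \<longrightarrow> f xs = g xs))"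

lemma cb_recfn: "recfn n f \<Longrightarrow> comp_by n f"
  unfolding comp_by_def by blast

lemma cb_ext: "comp_by n g \<Longrightarrow> (\<And>xs. length xs = n \<Longrightarrow> g xs = g' xs) \<Longrightarrow> comp_by n g'"
  unfolding comp_by_def by metis

lemma cb_const: "comp_by n (\<lambda>_. c)"
proof (induction c)
  case 0 show ?case by (rule cb_recfn, rule rf_zero)
next
  case (Suc c)
  then obtain f where f: "recfn n f" "\<And>xs. length xs = n \<Longrightarrow> f xs = c"
    unfolding comp_by_def by blast
  have "recfn n (\<lambda>xs. Suc (hd (map (\<lambda>f. f xs) [f])))"
    by (rule rf_comp[OF rf_succ]) (auto simp: f)
  then show ?case unfolding comp_by_def using f by auto
qed

lemma cb_proj: "i < n \<Longrightarrow> comp_by n (\<lambda>xs. xs ! i)"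
  by (rule cb_recfn, rule rf_proj)

lemma cb_succ: "comp_by 1 (\<lambda>xs. Suc (xs ! 0))"
  by (rule cb_ext[OF cb_recfn[OF rf_succ]]) (case_tac xs; auto)

lemma cb_comp1:
  assumes "comp_by 1 g" "comp_by n h"
  shows "comp_by n (\<lambda>xs. g [h xs])"
proof -
  obtain fg where fg: "recfn 1 fg" "\<And>xs. length xs = 1 \<Longrightarrow> fg xs = g xs"
    using assms(1) unfolding comp_by_def by blast
  obtain fh where fh: "recfn n fh" "\<And>xs. length xs = n \<Longrightarrow> fh xs = h xs"
    using assms(2) unfolding comp_by_def by blast
  have "recfn n (\<lambda>xs. fg (map (\<lambda>f. f xs) [fh]))"
    by (rule rf_comp[OF fg(1)]) (auto simp: fh)
  then show ?thesis unfolding comp_by_def using fg fh by auto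
qed

lemma cb_comp2:
  assumes "comp_by 2 g" "comp_by n h1" "comp_by n h2"
  shows "comp_by n (\<lambda>xs. g [h1 xs, h2 xs])"
proof -
  obtain fg where fg: "recfn 2 fg" "\<And>xs. length xs = 2 \<Longrightarrow> fg xs = g xs"
    using assms(1) unfolding comp_by_def by blast
  obtain f1 where f1: "recfn n f1" "\<And>xs. length xs = n \<Longrightarrow> f1 xs = h1 xs"
    using assms(2) unfolding comp_by_def by blast
  obtain f2 where f2: "recfn n f2" "\<And>xs. length xs = n \<Longrightarrow> f2 xs = h2 xs"
    using assms(3) unfolding comp_by_def by blast
  have "recfn n (\<lambda>xs. fg (map (\<lambda>f. f xs) [f1, f2]))"
    by (rule rf_comp[OF fg(1)]) (auto simp: f1 f2)
  then show ?thesis unfolding comp_by_def using fg f1 f2 by auto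
qed

lemma cb_prim:
  assumes "comp_by n g" "comp_by (Suc (Suc n)) h"
  shows "comp_by (Suc n) (\<lambda>xs. prim_rec g h (hd xs) (tl xs))"
proof -
  obtain fg where fg: "recfn n fg" "\<And>xs. length xs = n \<Longrightarrow> fg xs = g xs"
    using assms(1) unfolding comp_by_def by blast
  obtain fh where fh: "recfn (Suc (Suc n)) fh" "\<And>xs. length xs = Suc (Suc n) \<Longrightarrow> fh xs = h xs"
    using assms(2) unfolding comp_by_def by blast
  have eq: "prim_rec fg fh x ys = prim_rec g h x ys" if "length ys = n" for x ys
    using that by (induction x) (auto simp: fg fh)
  have "recfn (Suc n) (\<lambda>xs. prim_rec fg fh (hd xs) (tl xs))"
    by (rule rf_prim[OF fg(1) fh(1)])
  then show ?thesis unfolding comp_by_def using eq by auto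
qed

lemma cb_prim0:
  assumes "comp_by 0 g" "comp_by 2 h"
  shows "comp_by 1 (\<lambda>xs. prim_rec g h (hd xs) (tl xs))"
  using cb_prim[of 0 g h] assms by (simp add: numeral_2_eq_2)

lemma cb_prim1:
  assumes "comp_by 1 g" "comp_by 3 h"
  shows "comp_by 2 (\<lambda>xs. prim_rec g h (hd xs) (tl xs))"
  using cb_prim[of 1 g h] assms by (simp add: numeral_2_eq_2 numeral_3_eq_3)

lemma len1E: "length xs = 1 \<Longrightarrow> (\<And>a. xs = [a] \<Longrightarrow> P) \<Longrightarrow> P"
  by (cases xs) auto
lemma len2E: "length xs = 2 \<Longrightarrow> (\<And>a b. xs = [a, b] \<Longrightarrow> P) \<Longrightarrow> P"
  by (cases xs; cases "tl xs") (auto simp: numeral_2_eq_2)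

lemma len1: "length xs = Suc 0 \<Longrightarrow> xs = [xs ! 0]"
  by (cases xs) auto
lemma len2: "length xs = 2 \<Longrightarrow> xs = [xs ! 0, xs ! 1]"
  by (cases xs; cases "tl xs") auto

lemma cb_add: "comp_by 2 (\<lambda>xs. xs ! 0 + xs ! 1)"
proof -
  have h: "comp_by 3 (\<lambda>zs. (\<lambda>xs. Suc (xs ! 0)) [zs ! 1])"
    by (rule cb_comp1[OF cb_succ cb_proj]) simp
  have e: "prim_rec (\<lambda>ys. ys ! 0) (\<lambda>zs. Suc (zs ! 1)) x ys = x + ys ! 0" for x ys
    by (induction x) auto
  have "comp_by 2 (\<lambda>xs. prim_rec (\<lambda>ys. ys ! 0) (\<lambda>zs. Suc (zs ! 1)) (hd xs) (tl xs))"
    by (rule cb_prim1[OF cb_proj]) (use h in auto)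
  then show ?thesis
    by (rule cb_ext) (erule len2E, simp only: list.sel e, simp)
qed

lemma cb_mult: "comp_by 2 (\<lambda>xs. xs ! 0 * xs ! 1)"
proof -
  have h: "comp_by 3 (\<lambda>zs. (\<lambda>xs. xs ! 0 + xs ! 1) [zs ! 1, zs ! 2])"
    by (rule cb_comp2[OF cb_add cb_proj cb_proj]) simp_all
  have e: "prim_rec (\<lambda>_. 0) (\<lambda>zs. zs ! 1 + zs ! 2) x ys = x * ys ! 0" for x ys
    by (induction x) (auto simp: numeral_2_eq_2)
  have "comp_by 2 (\<lambda>xs. prim_rec (\<lambda>_. 0) (\<lambda>zs. zs ! 1 + zs ! 2) (hd xs) (tl xs))"
    by (rule cb_prim1[OF cb_const]) (use h in auto)
  then show ?thesis
    by (rule cb_ext) (erule len2E, simp only: list.sel e, simp)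
qed

lemma cb_pow2: "comp_by 1 (\<lambda>xs. 2 ^ (xs ! 0))"
proof -
  have h: "comp_by 2 (\<lambda>zs. (\<lambda>xs. xs ! 0 + xs ! 1) [zs ! 1, zs ! 1])"
    by (rule cb_comp2[OF cb_add cb_proj cb_proj]) simp_all
  have e: "prim_rec (\<lambda>_. 1) (\<lambda>zs. zs ! 1 + zs ! 1) x ys = 2 ^ x" for x ys
    by (induction x) auto
  have "comp_by 1 (\<lambda>xs. prim_rec (\<lambda>_. 1) (\<lambda>zs. zs ! 1 + zs ! 1) (hd xs) (tl xs))"
    by (rule cb_prim0[OF cb_const]) (use h in auto)
  then show ?thesis
    by (rule cb_ext) (erule len1E, simp only: list.sel e, simp)
qed

lemma cb_pred: "comp_by 1 (\<lambda>xs. xs ! 0 - 1)"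
proof -
  have e: "prim_rec (\<lambda>_. 0) (\<lambda>zs. zs ! 0) x ys = x - 1" for x ys
    by (induction x) auto
  have "comp_by 1 (\<lambda>xs. prim_rec (\<lambda>_. 0) (\<lambda>zs. zs ! 0) (hd xs) (tl xs))"
    by (rule cb_prim0[OF cb_const cb_proj]) auto
  then show ?thesis
    by (rule cb_ext) (erule len1E, simp only: list.sel e, simp)
qed

lemma cb_monus: "comp_by 2 (\<lambda>xs. xs ! 1 - xs ! 0)"
proof -
  have h: "comp_by 3 (\<lambda>zs. (\<lambda>xs. xs ! 0 - 1) [zs ! 1])"
    by (rule cb_comp1[OF cb_pred cb_proj]) simp
  have e: "prim_rec (\<lambda>ys. ys ! 0) (\<lambda>zs. zs ! 1 - 1) x ys = ys ! 0 - x" for x ys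
    by (induction x) auto
  have "comp_by 2 (\<lambda>xs. prim_rec (\<lambda>ys. ys ! 0) (\<lambda>zs. zs ! 1 - 1) (hd xs) (tl xs))"
    by (rule cb_prim1[OF cb_proj]) (use h in auto)
  then show ?thesis
    by (rule cb_ext) (erule len2E, simp only: list.sel e, simp)
qed

lemma cb_sg: "comp_by 1 (\<lambda>xs. of_bool (0 < xs ! 0))"
proof -
  have e: "prim_rec (\<lambda>_. 0) (\<lambda>_. 1) x ys = of_bool (0 < x)" for x ys
    by (induction x) auto
  have "comp_by 1 (\<lambda>xs. prim_rec (\<lambda>_. 0) (\<lambda>_. 1) (hd xs) (tl xs))"
    by (rule cb_prim0[OF cb_const cb_const])
  then show ?thesis
    by (rule cb_ext) (erule len1E, simp only: list.sel e, simp)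
qed

lemma cb_lt: "comp_by 1 E1 \<Longrightarrow> comp_by 1 E2 \<Longrightarrow> recursive_temporal_selection (\<lambda>k. E1 [k] < E2 [k])"
proof -
  assume a: "comp_by 1 E1" "comp_by 1 E2"
  have "comp_by 1 (\<lambda>xs. (\<lambda>ys. ys ! 1 - ys ! 0) [E1 xs, E2 xs])"
    by (rule cb_comp2[OF cb_monus a])
  then have "comp_by 1 (\<lambda>xs. (\<lambda>ys. of_bool (0 < ys ! 0)) [(\<lambda>ys. ys ! 1 - ys ! 0) [E1 xs, E2 xs]])"
    by (rule cb_comp1[OF cb_sg])
  then obtain f where "recfn 1 f" "\<And>xs. length xs = 1 \<Longrightarrow> f xs = of_bool (E1 xs < E2 xs)"
    unfolding comp_by_def by auto
  then show ?thesis unfolding recursive_temporal_selection_def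
    by (intro exI[of _ f]) auto
qed

lemma cb_mult': "comp_by n f \<Longrightarrow> comp_by n g \<Longrightarrow> comp_by n (\<lambda>xs. f xs * g xs)"
  by (drule (1) cb_comp2[OF cb_mult]) simp
lemma cb_add': "comp_by n f \<Longrightarrow> comp_by n g \<Longrightarrow> comp_by n (\<lambda>xs. f xs + g xs)"
  by (drule (1) cb_comp2[OF cb_add]) simp

lemma cb_Ak: "recfn 2 A \<Longrightarrow> comp_by 1 (\<lambda>xs. A [2 ^ (xs ! 0), m])"
  by (rule cb_comp2[OF cb_recfn cb_pow2 cb_const])

lemma sel_rec:
  assumes "recfn 2 A" "recfn 2 B" "recfn 2 C"
  shows "recursive_temporal_selection (\<lambda>k. d * A [2^k, m] < p * (C [2^k, m] + 1) + d * B [2^k, m])"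
    and "recursive_temporal_selection (\<lambda>k. p * (C [2^k, m] + 1) + d * B [2^k, m] < d * A [2^k, m])"
proof -
  have 1: "comp_by 1 (\<lambda>xs. d * A [2 ^ (xs ! 0), m])"
    by (rule cb_mult'[OF cb_const cb_Ak[OF assms(1)]])
  have 2: "comp_by 1 (\<lambda>xs. p * (C [2 ^ (xs ! 0), m] + 1) + d * B [2 ^ (xs ! 0), m])"
    by (rule cb_add'[OF cb_mult'[OF cb_const cb_add'[OF cb_Ak[OF assms(3)] cb_const]]
          cb_mult'[OF cb_const cb_Ak[OF assms(2)]]])
  show "recursive_temporal_selection (\<lambda>k. d * A [2^k, m] < p * (C [2^k, m] + 1) + d * B [2^k, m])"
    using cb_lt[OF 1 2] by simp
  show "recursive_temporal_selection (\<lambda>k. p * (C [2^k, m] + 1) + d * B [2^k, m] < d * A [2^k, m])"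
    using cb_lt[OF 2 1] by simp
qed



lemma sel_count_mono: "m \<le> n \<Longrightarrow> sel_count Sel m \<le> sel_count Sel n"
  unfolding sel_count_def by (rule sum_mono2) auto

lemma sel_count_Suc: "sel_count Sel (Suc n) = sel_count Sel n + of_bool (Sel n)"
  unfolding sel_count_def by simp

lemma sel_count_tendsto:
  assumes inf: "\<And>N. \<exists>k\<ge>N. Sel k"
  shows "filterlim (sel_count Sel) at_top sequentially"
proof -
  have ex: "\<exists>n. real N \<le> sel_count Sel n" for N
  proof (induction N)
    case 0 show ?case by (auto simp: sel_count_def intro!: sum_nonneg)
  next
    case (Suc N)
    then obtain n where n: "real N \<le> sel_count Sel n" by blast
    obtain k where k: "k \<ge> n" "Sel k" using inf by blast
    have "sel_count Sel n \<le> sel_count Sel k" by (rule sel_count_mono[OF k(1)])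
    then have "real (Suc N) \<le> sel_count Sel (Suc k)" using n k by (simp add: sel_count_Suc)
    then show ?case by blast
  qed
  show ?thesis unfolding filterlim_at_top
  proof
    fix Z :: real
    obtain N :: nat where N: "Z \<le> real N" using real_arch_simple by blast
    obtain n where "real N \<le> sel_count Sel n" using ex by blast
    then have n: "Z \<le> sel_count Sel n" using N by linarith
    have "Z \<le> sel_count Sel x" if "x \<ge> n" for x
      using sel_count_mono[OF that, of Sel] n by linarith
    then show "\<forall>\<^sub>F x in sequentially. Z \<le> sel_count Sel x"
      unfolding eventually_sequentially by blast
  qed
qed

lemma sel_count_pos:
  assumes "filterlim (sel_count Sel) at_top sequentially"
  shows "\<forall>\<^sub>F n in sequentially. 0 < sel_count Sel n"
proof -
  have "\<forall>\<^sub>F n in sequentially. 1 \<le> sel_count Sel n"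
    using assms unfolding filterlim_at_top by blast
  then show ?thesis by eventually_elim simp
qed

lemma divlem:
  fixes N1 N2 S d :: real
  assumes "N1 \<le> N2 - d * S" "0 < S"
  shows "N1 / S \<le> N2 / S - d"
proof -
  have "N1 / S \<le> (N2 - d * S) / S" using assms by (simp add: divide_right_mono)
  also have "\<dots> = N2 / S - d" using assms(2) by (simp add: diff_divide_distrib)
  finally show ?thesis .
qed

lemma divlem2:
  fixes N1 N2 S d :: real
  assumes "N2 + d * S \<le> N1" "0 < S"
  shows "N2 / S + d \<le> N1 / S"
proof -
  have "(N2 + d * S) / S \<le> N1 / S" using assms by (simp add: divide_right_mono)
  moreover have "(N2 + d * S) / S = N2 / S + d" using assms(2) by (simp add: add_divide_distrib)
  ultimately show ?thesis by simp
qed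

lemma low_side:
  fixes \<phi> :: "bool list \<Rightarrow> interval" and \<omega> :: "nat \<Rightarrow> bool"
  assumes rs: "recursive_temporal_selection Sel" and inf: "\<And>N. \<exists>k\<ge>N. Sel k"
    and pr: "precise \<phi>" and wphi: "wCH_random \<phi> \<omega>" and wI: "wCH_random (\<lambda>_. I) \<omega>"
    and bound: "\<And>k. Sel k \<Longrightarrow> lower \<phi> (prefix \<omega> k) \<le> c" and ca: "c < fst I"
  shows False
proof -
  define \<delta> where "\<delta> = fst I - c"
  have dpos: "\<delta> > 0" using ca by (simp add: \<delta>_def)
  have lim: "filterlim (sel_count Sel) at_top sequentially" by (rule sel_count_tendsto[OF inf])
  define u where "u n = (\<Sum>k<n. of_bool (Sel k) * (of_bool (\<omega> k) - fst I)) / sel_count Sel n" for n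
  define v where "v n = (\<Sum>k<n. of_bool (Sel k) * (of_bool (\<omega> k) - lower \<phi> (prefix \<omega> k))) / sel_count Sel n" for n
  have "liminf (\<lambda>n. ereal (u n)) \<ge> 0"
    using conjunct1[OF wI[unfolded wCH_random_def, rule_format, OF conjI[OF rs lim]]]
    by (simp only: u_def lower_def)
  moreover have "ereal (- \<delta>/2) < 0" using dpos by simp
  ultimately have "ereal (- \<delta>/2) < liminf (\<lambda>n. ereal (u n))" by (meson order_less_le_trans)
  then have e1: "\<forall>\<^sub>F n in sequentially. - \<delta>/2 < u n"
    by (rule less_LiminfD[THEN eventually_mono]) simp
  have "limsup (\<lambda>n. ereal ((\<Sum>k<n. of_bool (Sel k) * (of_bool (\<omega> k) - upper \<phi> (prefix \<omega> k))) / sel_count Sel n)) \<le> 0"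
    using conjunct2[OF wphi[unfolded wCH_random_def, rule_format, OF conjI[OF rs lim]]] .
  then have "limsup (\<lambda>n. ereal (v n)) \<le> 0"
    using pr unfolding precise_def v_def by (simp only:)
  moreover have "0 < ereal (\<delta>/2)" using dpos by simp
  ultimately have "limsup (\<lambda>n. ereal (v n)) < ereal (\<delta>/2)" by (meson order_le_less_trans)
  then have e2: "\<forall>\<^sub>F n in sequentially. v n < \<delta>/2"
    by (rule Limsup_lessD[THEN eventually_mono]) simp
  obtain n where n: "- \<delta>/2 < u n" "v n < \<delta>/2" "0 < sel_count Sel n"
  proof -
    have "\<forall>\<^sub>F n in sequentially. - \<delta>/2 < u n \<and> v n < \<delta>/2 \<and> 0 < sel_count Sel n"
      using e1 e2 sel_count_pos[OF lim] by eventually_elim blast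
    then show ?thesis using that unfolding eventually_sequentially by blast
  qed
  have "(\<Sum>k<n. of_bool (Sel k) * (of_bool (\<omega> k) - fst I))
      \<le> (\<Sum>k<n. of_bool (Sel k) * (of_bool (\<omega> k) - lower \<phi> (prefix \<omega> k)) - \<delta> * of_bool (Sel k))"
    by (rule sum_mono) (use bound in \<open>simp add: \<delta>_def\<close>)
  also have "\<dots> = (\<Sum>k<n. of_bool (Sel k) * (of_bool (\<omega> k) - lower \<phi> (prefix \<omega> k))) - \<delta> * sel_count Sel n"
    by (simp add: sum_subtractf sum_distrib_left sel_count_def)
  finally have "u n \<le> v n - \<delta>"
    unfolding u_def v_def by (rule divlem[OF _ n(3)])
  then show False using n by linarith
qed
lemma high_side:
  fixes \<phi> :: "bool list \<Rightarrow> interval" and \<omega> :: "nat \<Rightarrow> bool"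
  assumes rs: "recursive_temporal_selection Sel" and inf: "\<And>N. \<exists>k\<ge>N. Sel k"
    and wphi: "wCH_random \<phi> \<omega>" and wI: "wCH_random (\<lambda>_. I) \<omega>"
    and bound: "\<And>k. Sel k \<Longrightarrow> c \<le> lower \<phi> (prefix \<omega> k)" and ca: "snd I < c"
  shows False
proof -
  define \<delta> where "\<delta> = c - snd I"
  have dpos: "\<delta> > 0" using ca by (simp add: \<delta>_def)
  have lim: "filterlim (sel_count Sel) at_top sequentially" by (rule sel_count_tendsto[OF inf])
  define u where "u n = (\<Sum>k<n. of_bool (Sel k) * (of_bool (\<omega> k) - snd I)) / sel_count Sel n" for n
  define v where "v n = (\<Sum>k<n. of_bool (Sel k) * (of_bool (\<omega> k) - lower \<phi> (prefix \<omega> k))) / sel_count Sel n" for n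
  have "liminf (\<lambda>n. ereal (v n)) \<ge> 0"
    using conjunct1[OF wphi[unfolded wCH_random_def, rule_format, OF conjI[OF rs lim]]]
    by (simp only: v_def)
  moreover have "ereal (- \<delta>/2) < 0" using dpos by simp
  ultimately have "ereal (- \<delta>/2) < liminf (\<lambda>n. ereal (v n))" by (meson order_less_le_trans)
  then have e1: "\<forall>\<^sub>F n in sequentially. - \<delta>/2 < v n"
    by (rule less_LiminfD[THEN eventually_mono]) simp
  have "limsup (\<lambda>n. ereal (u n)) \<le> 0"
    using conjunct2[OF wI[unfolded wCH_random_def, rule_format, OF conjI[OF rs lim]]]
    by (simp only: u_def upper_def)
  moreover have "0 < ereal (\<delta>/2)" using dpos by simp
  ultimately have "limsup (\<lambda>n. ereal (u n)) < ereal (\<delta>/2)" by (meson order_le_less_trans)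
  then have e2: "\<forall>\<^sub>F n in sequentially. u n < \<delta>/2"
    by (rule Limsup_lessD[THEN eventually_mono]) simp
  obtain n where n: "- \<delta>/2 < v n" "u n < \<delta>/2" "0 < sel_count Sel n"
  proof -
    have "\<forall>\<^sub>F n in sequentially. - \<delta>/2 < v n \<and> u n < \<delta>/2 \<and> 0 < sel_count Sel n"
      using e1 e2 sel_count_pos[OF lim] by eventually_elim blast
    then show ?thesis using that unfolding eventually_sequentially by blast
  qed
  have "(\<Sum>k<n. of_bool (Sel k) * (of_bool (\<omega> k) - lower \<phi> (prefix \<omega> k))) + \<delta> * sel_count Sel n
      = (\<Sum>k<n. of_bool (Sel k) * (of_bool (\<omega> k) - lower \<phi> (prefix \<omega> k)) + \<delta> * of_bool (Sel k))"
    by (simp add: sum.distrib sum_distrib_left sel_count_def)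
  also have "\<dots> \<le> (\<Sum>k<n. of_bool (Sel k) * (of_bool (\<omega> k) - snd I))"
    by (rule sum_mono) (use bound in \<open>simp add: \<delta>_def\<close>)
  finally have "v n + \<delta> \<le> u n"
    unfolding u_def v_def by (rule divlem2[OF _ n(3)])
  then show False using n by linarith
qed



lemma sit_code_rep: "sit_code (replicate k False) = 2 ^ k"
  by (induction k) auto

lemma rat_lt:
  fixes A B C p d :: nat
  assumes "d > 0"
  shows "(real A - real B) / (real C + 1) < real p / real d \<longleftrightarrow> d * A < p * (C + 1) + d * B"
proof -
  have "(real A - real B) / (real C + 1) < real p / real d \<longleftrightarrow> (real A - real B) * real d < real p * (real C + 1)"
    using assms by (simp add: divide_less_eq less_divide_eq field_simps add_pos_nonneg)
  also have "\<dots> \<longleftrightarrow> real (d * A) < real (p * (C + 1) + d * B)"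
    by (simp add: algebra_simps)
  also have "\<dots> \<longleftrightarrow> d * A < p * (C + 1) + d * B" by (rule of_nat_less_iff)
  finally show ?thesis .
qed

lemma rat_gt:
  fixes A B C p d :: nat
  assumes "d > 0"
  shows "real p / real d < (real A - real B) / (real C + 1) \<longleftrightarrow> p * (C + 1) + d * B < d * A"
proof -
  have "real p / real d < (real A - real B) / (real C + 1) \<longleftrightarrow> real p * (real C + 1) < (real A - real B) * real d"
    using assms by (simp add: divide_less_eq less_divide_eq field_simps add_pos_nonneg)
  also have "\<dots> \<longleftrightarrow> real (p * (C + 1) + d * B) < real (d * A)"
    by (simp add: algebra_simps)
  also have "\<dots> \<longleftrightarrow> p * (C + 1) + d * B < d * A" by (rule of_nat_less_iff)
  finally show ?thesis .
qed

lemma pos_rat_nat: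
  assumes "r \<in> \<rat>" "r > 0"
  obtains p d :: nat where "d > 0" "r = real p / real d"
proof -
  obtain i j :: int where ij: "j > 0" "r = of_int i / of_int j" using assms(1) by (rule Rats_cases')
  then have "i > 0" using assms(2) by (simp add: zero_less_divide_iff)
  then have "r = real (nat i) / real (nat j)" "nat j > 0" using ij by auto
  then show ?thesis using that by blast
qed

theorem proposition17:
  fixes \<phi> :: "bool list \<Rightarrow> interval" and \<omega> :: "nat \<Rightarrow> bool"
  assumes "forecasting_system \<phi>" and "computable_fs \<phi>" and "precise \<phi>" and "temporal \<phi>"
    and "wCH_random \<phi> \<omega>"
  shows "{x::real. liminf (\<lambda>n. ereal (lower \<phi> (prefix \<omega> n))) \<le> ereal x \<and>
                   ereal x \<le> limsup (\<lambda>n. ereal (lower \<phi> (prefix \<omega> n)))} \<subseteq> I_wCH \<omega>"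
proof -
  note fs = assms(1) and pr = assms(3) and wphi = assms(5)
  define f where "f k = lower \<phi> (prefix \<omega> k)" for k
  have f01: "0 \<le> f k" for k
    using fs unfolding forecasting_system_def is_interval_def f_def lower_def by blast
  obtain A B C where ABC: "recfn 2 A" "recfn 2 B" "recfn 2 C"
    and appr: "\<And>s n. \<bar>lower \<phi> s - (real (A [sit_code s, n]) - real (B [sit_code s, n]))
                       / (real (C [sit_code s, n]) + 1)\<bar> < (1/2) ^ n"
    using assms(2) unfolding computable_fs_def recursive_rat_approx_def by blast
  define q where "q m k = (real (A [2^k, m]) - real (B [2^k, m])) / (real (C [2^k, m]) + 1)" for m k :: nat
  have fq: "\<bar>f k - q m k\<bar> < (1/2) ^ m" for k m
  proof -
    have "prefix \<omega> k = prefix \<omega> k" ..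
    have "\<phi> (prefix \<omega> k) = \<phi> (replicate k False)"
      using assms(4) unfolding temporal_def prefix_def by simp
    then have "f k = lower \<phi> (replicate k False)" by (simp add: f_def lower_def)
    then show ?thesis using appr[of "replicate k False" m] by (simp add: q_def sit_code_rep)
  qed
  show ?thesis
  proof
    fix x assume x: "x \<in> {x::real. liminf (\<lambda>n. ereal (lower \<phi> (prefix \<omega> n))) \<le> ereal x \<and>
                   ereal x \<le> limsup (\<lambda>n. ereal (lower \<phi> (prefix \<omega> n)))}"
    then have xl: "liminf (\<lambda>n. ereal (f n)) \<le> ereal x" and xu: "ereal x \<le> limsup (\<lambda>n. ereal (f n))"
      by (auto simp: f_def)
    show "x \<in> I_wCH \<omega>"
      unfolding I_wCH_def
    proof
      fix I assume I: "I \<in> I_wCH_family \<omega>"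
      then have Iint: "is_interval I" and wI: "wCH_random (\<lambda>_. I) \<omega>"
        by (auto simp: I_wCH_family_def)
      have low: "ereal (fst I) \<le> liminf (\<lambda>n. ereal (f n))"
      proof (rule ccontr)
        assume "\<not> ?thesis"
        then have "liminf (\<lambda>n. ereal (f n)) < ereal (fst I)" by simp
        then obtain t1 where t1: "liminf (\<lambda>n. ereal (f n)) < ereal t1" "ereal t1 < ereal (fst I)"
          using ereal_dense2 by blast
        then obtain t2 where t2: "ereal t1 < ereal t2" "ereal t2 < ereal (fst I)"
          using ereal_dense2 by blast
        have t12: "t1 < t2" "t2 < fst I" using t2 by auto
        obtain m where m: "(1/2::real) ^ m < (t2 - t1) / 4"
          using real_arch_pow_inv[of "(t2 - t1) / 4" "1/2"] t12 by auto
        define e where "e = (1/2::real) ^ m"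
        have epos: "e > 0" by (simp add: e_def)
        obtain r where r: "r \<in> \<rat>" "t1 + e < r" "r < t2 - e"
        proof -
          have "e > 0" by (simp add: e_def)
          moreover have "e < (t2 - t1) / 4" using m by (simp add: e_def)
          ultimately have "t1 + e < t2 - e" by (simp add: field_simps)
          then show ?thesis using Rats_dense_in_real that by blast
        qed
        have freq: "\<exists>k>N. f k < t1" for N
          using liminf_upper_bound[OF t1(1), of N] by auto
        obtain k0 where "f k0 < t1" using freq by blast
        then have "r > 0" using f01[of k0] r epos by linarith
        then obtain p d :: nat where pd: "d > 0" "r = real p / real d" using pos_rat_nat r(1) by blast
        define Sel where "Sel k \<longleftrightarrow> d * A [2^k, m] < p * (C [2^k, m] + 1) + d * B [2^k, m]" for k
        have rs: "recursive_temporal_selection Sel"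
          unfolding Sel_def by (rule sel_rec(1)[OF ABC])
        have Sel_iff: "Sel k \<longleftrightarrow> q m k < r" for k
          unfolding Sel_def q_def pd(2) using rat_lt[OF pd(1)] by simp
        have inf: "\<exists>k\<ge>N. Sel k" for N
        proof -
          obtain k where k: "k > N" "f k < t1" using freq by blast
          have "q m k < r" using fq[of k m] k r by (simp add: e_def abs_less_iff)
          then show ?thesis using k Sel_iff by (intro exI[of _ k]) auto
        qed
        have bound: "f k \<le> t2" if "Sel k" for k
          using fq[of k m] that Sel_iff[of k] r by (simp add: e_def abs_less_iff)
        show False
          by (rule low_side[OF rs inf pr wphi wI, of t2]) (use bound t12 in \<open>auto simp: f_def\<close>)
      qed
      have high: "limsup (\<lambda>n. ereal (f n)) \<le> ereal (snd I)"
      proof (rule ccontr)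
        assume "\<not> ?thesis"
        then have "ereal (snd I) < limsup (\<lambda>n. ereal (f n))" by simp
        then obtain t1 where t1: "ereal t1 < limsup (\<lambda>n. ereal (f n))" "ereal (snd I) < ereal t1"
          using ereal_dense2 by blast
        then obtain t2 where t2: "ereal t2 < ereal t1" "ereal (snd I) < ereal t2"
          using ereal_dense2 by blast
        have t12: "t2 < t1" "snd I < t2" using t2 by auto
        obtain m where m: "(1/2::real) ^ m < (t1 - t2) / 4"
          using real_arch_pow_inv[of "(t1 - t2) / 4" "1/2"] t12 by auto
        define e where "e = (1/2::real) ^ m"
        have epos: "e > 0" by (simp add: e_def)
        obtain r where r: "r \<in> \<rat>" "t2 + e < r" "r < t1 - e"
        proof -
          have "e > 0" by (simp add: e_def)
          moreover have "e < (t1 - t2) / 4" using m by (simp add: e_def)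
          ultimately have "t2 + e < t1 - e" by (simp add: field_simps)
          then show ?thesis using Rats_dense_in_real that by blast
        qed
        have freq: "\<exists>k>N. t1 < f k" for N
        proof (rule ccontr)
          assume "\<not> ?thesis"
          then have "\<forall>\<^sub>F k in sequentially. ereal (f k) \<le> ereal t1"
            unfolding eventually_sequentially by (auto intro!: exI[of _ "Suc N"] simp: not_less Suc_le_eq) (meson not_le)
          then have "limsup (\<lambda>n. ereal (f n)) \<le> ereal t1" by (rule Limsup_bounded)
          then show False using t1 by simp
        qed
        have "0 \<le> snd I" using Iint unfolding is_interval_def by linarith
        then have "r > 0" using r t12 epos by linarith
        then obtain p d :: nat where pd: "d > 0" "r = real p / real d" using pos_rat_nat r(1) by blast
        define Sel where "Sel k \<longleftrightarrow> p * (C [2^k, m] + 1) + d * B [2^k, m] < d * A [2^k, m]" for k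
        have rs: "recursive_temporal_selection Sel"
          unfolding Sel_def by (rule sel_rec(2)[OF ABC])
        have Sel_iff: "Sel k \<longleftrightarrow> r < q m k" for k
          unfolding Sel_def q_def pd(2) using rat_gt[OF pd(1)] by simp
        have inf: "\<exists>k\<ge>N. Sel k" for N
        proof -
          obtain k where k: "k > N" "t1 < f k" using freq by blast
          have "r < q m k" using fq[of k m] k r by (simp add: e_def abs_less_iff)
          then show ?thesis using k Sel_iff by (intro exI[of _ k]) auto
        qed
        have bound: "t2 \<le> f k" if "Sel k" for k
          using fq[of k m] that Sel_iff[of k] r by (simp add: e_def abs_less_iff)
        show False
          by (rule high_side[OF rs inf wphi wI, of t2]) (use bound t12 in \<open>auto simp: f_def\<close>)
      qed
      have "ereal (fst I) \<le> ereal x" using low xl by (rule order_trans)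
      moreover have "ereal x \<le> ereal (snd I)" using xu high by (rule order_trans)
      ultimately show "x \<in> {fst I..snd I}" by simp
    qed
  qed
qed

end
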